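(* Let $d\ge2$, $b:=2^d$, $N\in\mathbb{N}$, $L:=\min\{\ell\ge0:b^\ell\ge N\}$, and assume $L\ge3$. For each $\ell\in\{0,1,\dots,L-2\}$ there exists a family $\{R_u\}_{u\in\{0,\dots,b-1\}^\ell}$ of half-open rectangles in $Q=[0,1)^d$ such that: (i) $\{R_u:|u|=\ell\}$ partitions $Q$ up to $\lambda_d$-null sets; (ii) $\lambda_d(R_u)=M(u)/N$ for every $|u|=\ell$; (iii) writing $C_u=\prod_{j=1}^d[A_{u,j},A_{u,j}+2^{-\ell})$ and $R_u=\prod_{j=1}^d[a_{u,j},b_{u,j})$, one has $|a_{u,j}-A_{u,j}|\le S_\ell$ and $|b_{u,j}-(A_{u,j}+2^{-\ell})|\le S_\ell$ for all $1\le j\le d$.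
   Context: $\lambda_d$ is Lebesgue measure. For $0\le\ell\le L-3$: $\Delta_\ell:=\frac{2^{2d-3}}{N}2^{\ell(d-1)}$, $S_0:=0$, $S_{\ell+1}:=S_\ell+\Delta_\ell$. $M(u):=\#\{1\le n\le N:x_n\in C_u\}$, where: for $a\in\{0,\dots,b-1\}$, $a=\sum_{j=1}^d\varepsilon_j(a)2^{j-1}$ with $\varepsilon_j(a)\in\{0,1\}$; for $m\ge0$, $m=\sum_{k\ge0}a_k(m)b^k$ in base $b$; $x_n:=\bigl(\sum_{k\ge0}\varepsilon_1(a_k(n-1))2^{-(k+1)},\dots,\sum_{k\ge0}\varepsilon_d(a_k(n-1))2^{-(k+1)}\bigr)$; and for a word $u=(u_0,\dots,u_{\ell-1})$, $C_u:=\prod_{j=1}^d\bigl[\sum_{k=0}^{\ell-1}\varepsilon_j(u_k)2^{-(k+1)},\sum_{k=0}^{\ell-1}\varepsilon_j(u_k)2^{-(k+1)}+2^{-\ell}\bigr)$, with $C_\varnothing=Q$ for the empty word. *)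

theory Defs
  imports "HOL-Analysis.Analysis"
begin

text \<open>Coordinates are indexed by j in {1..d}; points of R^d are extensional
functions nat => real with support {1..d}.\<close>

definition lebd :: "nat \<Rightarrow> (nat \<Rightarrow> real) measure" where
  "lebd d = PiM {1..d} (\<lambda>_. lborel)"

definition hbox :: "nat \<Rightarrow> (nat \<Rightarrow> real) \<Rightarrow> (nat \<Rightarrow> real) \<Rightarrow> (nat \<Rightarrow> real) set" where
  "hbox d lo hi = PiE {1..d} (\<lambda>j. {lo j ..< hi j})"

definition unitQ :: "nat \<Rightarrow> (nat \<Rightarrow> real) set" where
  "unitQ d = PiE {1..d} (\<lambda>_. {0 ..< 1})"

definition eps :: "nat \<Rightarrow> nat \<Rightarrow> nat" where
  "eps j a = (a div 2 ^ (j - 1)) mod 2"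

definition digit :: "nat \<Rightarrow> nat \<Rightarrow> nat \<Rightarrow> nat" where
  "digit b k m = (m div b ^ k) mod b"

text \<open>The point x_n (base b = 2^d). The series is finite: digits a_k(n-1) vanish for k >= n.\<close>
definition xpt :: "nat \<Rightarrow> nat \<Rightarrow> (nat \<Rightarrow> real)" where
  "xpt d n = restrict (\<lambda>j. \<Sum>k<n. real (eps j (digit (2 ^ d) k (n - 1))) / 2 ^ (k + 1)) {1..d}"

definition corner :: "nat list \<Rightarrow> nat \<Rightarrow> real" where
  "corner u j = (\<Sum>k<length u. real (eps j (u ! k)) / 2 ^ (k + 1))"

definition cube :: "nat \<Rightarrow> nat list \<Rightarrow> (nat \<Rightarrow> real) set" where
  "cube d u = hbox d (corner u) (\<lambda>j. corner u j + 1 / 2 ^ length u)"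

definition Mcount :: "nat \<Rightarrow> nat \<Rightarrow> nat list \<Rightarrow> nat" where
  "Mcount d N u = card {n \<in> {1..N}. xpt d n \<in> cube d u}"

definition words :: "nat \<Rightarrow> nat \<Rightarrow> nat list set" where
  "words d l = {u. length u = l \<and> set u \<subseteq> {..<2 ^ d}}"

definition Lmin :: "nat \<Rightarrow> nat \<Rightarrow> nat" where
  "Lmin d N = (LEAST l. (2 ^ d :: nat) ^ l \<ge> N)"

definition Delta :: "nat \<Rightarrow> nat \<Rightarrow> nat \<Rightarrow> real" where
  "Delta d N l = 2 ^ (2 * d - 3) / real N * 2 ^ (l * (d - 1))"

definition Ssum :: "nat \<Rightarrow> nat \<Rightarrow> nat \<Rightarrow> real" where
  "Ssum d N l = (\<Sum>i<l. Delta d N i)"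

end

theory Submission
  imports Defs
begin


lemma measure_hbox:
  assumes "\<And>j. j \<in> {1..d} \<Longrightarrow> lo j \<le> hi j"
  shows "measure (lebd d) (hbox d lo hi) = (\<Prod>j\<in>{1..d}. hi j - lo j)"
proof -
  interpret product_sigma_finite "\<lambda>_::nat. lborel::real measure" by standard
  have "emeasure (lebd d) (hbox d lo hi) = (\<Prod>j\<in>{1..d}. emeasure lborel {lo j..<hi j})"
    unfolding lebd_def hbox_def by (rule emeasure_PiM) auto
  also have "\<dots> = (\<Prod>j\<in>{1..d}. ennreal (hi j - lo j))" using assms by (intro prod.cong) auto
  also have "\<dots> = ennreal (\<Prod>j\<in>{1..d}. hi j - lo j)" using assms by (subst prod_ennreal) auto
  finally have "emeasure (lebd d) (hbox d lo hi) = ennreal (\<Prod>j\<in>{1..d}. hi j - lo j)" .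
  moreover have "(\<Prod>j\<in>{1..d}. hi j - lo j) \<ge> 0" using assms by (intro prod_nonneg) auto
  ultimately show ?thesis by (simp add: measure_def)
qed

fun vl :: "nat \<Rightarrow> nat list \<Rightarrow> nat" where
  "vl B [] = 0" | "vl B (a # u) = a + B * vl B u"

lemma vl_snoc: "vl B (u @ [a]) = vl B u + B ^ length u * a"
  by (induction u) (auto simp: algebra_simps)

lemma vl_less: "set u \<subseteq> {..<B} \<Longrightarrow> vl B u < B ^ length u"
proof (induction u)
  case Nil then show ?case by simp
next
  case (Cons a u)
  then have "a < B" "vl B u < B ^ length u" by auto
  then have "a + B * vl B u < B + B * vl B u" by simp
  also have "\<dots> = B * (vl B u + 1)" by simp
  also have "\<dots> \<le> B * B ^ length u" using \<open>vl B u < B ^ length u\<close>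
    by (intro mult_le_mono2) simp
  finally show ?case by simp
qed

lemma digit_Suc: "digit B (Suc k) m = digit B k (m div B)"
  by (simp add: digit_def div_mult2_eq)

lemma digit_0: "digit B 0 m = m mod B"
  by (simp add: digit_def)

lemma digits_iff:
  "set u \<subseteq> {..<B} \<Longrightarrow> (\<forall>k<length u. digit B k m = u ! k) \<longleftrightarrow> m mod B ^ length u = vl B u"
proof (induction u arbitrary: m)
  case Nil then show ?case by simp
next
  case (Cons a u)
  have aB: "a < B" using Cons by auto
  have IH: "(\<forall>k<length u. digit B k (m div B) = u ! k) \<longleftrightarrow> (m div B) mod B ^ length u = vl B u"
    using Cons by auto
  have "(\<forall>k<length (a#u). digit B k m = (a#u) ! k) \<longleftrightarrow>
        m mod B = a \<and> (\<forall>k<length u. digit B k (m div B) = u ! k)"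
    by (auto simp: digit_0 digit_Suc less_Suc_eq_0_disj)
  also have "\<dots> \<longleftrightarrow> m mod B = a \<and> (m div B) mod B ^ length u = vl B u" using IH by simp
  also have "\<dots> \<longleftrightarrow> m mod B ^ length (a#u) = vl B (a#u)"
  proof -
    have e: "m mod B ^ length (a#u) = B * ((m div B) mod B ^ length u) + m mod B"
      by (simp add: mod_mult2_eq)
    have "B * x + y = B * x' + y' \<longleftrightarrow> x = x' \<and> y = y'" if "y < B" "y' < B" for x x' y y' :: nat
    proof
      assume h: "B * x + y = B * x' + y'"
      have "(B * x + y) mod B = y" "(B * x + y) div B = x" using that by auto
      moreover have "(B * x' + y') mod B = y'" "(B * x' + y') div B = x'" using that by auto
      ultimately show "x = x' \<and> y = y'" using h by metis
    qed auto
    moreover have "m mod B < B" using aB by simp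
    ultimately show ?thesis using e aB by (auto simp: add.commute)
  qed
  finally show ?case .
qed



lemma card_mod:
  assumes "0 < B" "v < B"
  shows "card {m. m < N \<and> m mod B = v} = N div B + (if v < N mod B then 1 else 0)"
proof (induction N)
  case 0 then show ?case by simp
next
  case (Suc N)
  have e: "{m. m < Suc N \<and> m mod B = v} = {m. m < N \<and> m mod B = v} \<union> (if N mod B = v then {N} else {})"
    by (auto simp: less_Suc_eq)
  have c: "card {m. m < Suc N \<and> m mod B = v} = card {m. m < N \<and> m mod B = v} + (if N mod B = v then 1 else 0)"
    unfolding e by (auto)
  have m: "N mod B < B" using assms by simp
  show ?case
  proof (cases "Suc (N mod B) = B")
    case True
    then have "Suc N mod B = 0" "Suc N div B = Suc (N div B)" by (simp_all add: mod_Suc div_Suc)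
    then show ?thesis using c Suc.IH True assms by auto
  next
    case False
    then have "Suc N mod B = Suc (N mod B)" "Suc N div B = N div B" by (simp_all add: mod_Suc div_Suc)
    then show ?thesis using c Suc.IH False assms m by (auto simp: less_Suc_eq)
  qed
qed

lemma eps_le1: "eps j a \<le> 1" by (simp add: eps_def)
lemma eps_cases: "eps j a = 0 \<or> eps j a = 1" by (auto simp: eps_def)

lemma eps_eq_imp_eq:
  "a < 2 ^ d \<Longrightarrow> a' < 2 ^ d \<Longrightarrow> (\<forall>j\<in>{1..d}. eps j a = eps j a') \<Longrightarrow> a = a'"
proof (induction d arbitrary: a a')
  case 0 then show ?case by simp
next
  case (Suc d)
  have "eps 1 a = eps 1 a'" using Suc.prems by auto
  then have m: "a mod 2 = a' mod 2" by (simp add: eps_def)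
  have "\<forall>j\<in>{1..d}. eps j (a div 2) = eps j (a' div 2)"
  proof
    fix j assume j: "j \<in> {1..d}"
    then have "eps (Suc j) a = eps (Suc j) a'" using Suc.prems by auto
    moreover have "eps (Suc j) x = eps j (x div 2)" for x using j
    proof -
      obtain i where "j = Suc i" using j by (cases j) auto
      then show ?thesis by (simp add: eps_def div_mult2_eq)
    qed
    ultimately show "eps j (a div 2) = eps j (a' div 2)" by simp
  qed
  moreover have "a div 2 < 2 ^ d" "a' div 2 < 2 ^ d" using Suc.prems by auto
  ultimately have "a div 2 = a' div 2" using Suc.IH by blast
  then show ?case using m by (metis div_mult_mod_eq)
qed

lemma sum_lt1: "(\<forall>k. \<beta> k \<le> (1::nat)) \<Longrightarrow> (\<Sum>k<K. real (\<beta> k) / 2 ^ (k+1)) < 1"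
proof -
  assume h: "\<forall>k. \<beta> k \<le> (1::nat)"
  have "(\<Sum>k<K. real (\<beta> k) / 2 ^ (k+1)) \<le> (\<Sum>k<K. 1 / 2 ^ (k+1))"
    using h by (intro sum_mono) (auto simp: divide_right_mono)
  also have "\<dots> = 1 - 1 / 2 ^ K"
    by (induction K) (auto simp: field_simps)
  also have "\<dots> < 1" by simp
  finally show ?thesis .
qed

lemma sum_ge0: "0 \<le> (\<Sum>k<K. real (\<beta> k) / 2 ^ (k+1))"
  by (intro sum_nonneg) auto

lemma bin:
  assumes "\<forall>k. \<beta> k \<le> (1::nat)" "\<forall>k. \<gamma> k \<le> (1::nat)" "l \<le> K"
  shows "((\<Sum>k<l. real (\<gamma> k) / 2 ^ (k+1)) \<le> (\<Sum>k<K. real (\<beta> k) / 2 ^ (k+1)) \<and>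
          (\<Sum>k<K. real (\<beta> k) / 2 ^ (k+1)) < (\<Sum>k<l. real (\<gamma> k) / 2 ^ (k+1)) + 1 / 2 ^ l)
         \<longleftrightarrow> (\<forall>k<l. \<beta> k = \<gamma> k)"
  using assms
proof (induction l arbitrary: \<beta> \<gamma> K)
  case 0
  then show ?case using sum_lt1[of \<beta> K] sum_ge0[of \<beta> K] by simp
next
  case (Suc l)
  obtain K' where K: "K = Suc K'" using Suc.prems(3) by (cases K) auto
  define x where "x = (\<Sum>k<K'. real (\<beta> (Suc k)) / 2 ^ (k+1))"
  define c where "c = (\<Sum>k<l. real (\<gamma> (Suc k)) / 2 ^ (k+1))"
  have sx: "(\<Sum>k<K. real (\<beta> k) / 2 ^ (k+1)) = real (\<beta> 0) / 2 + x / 2"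
    unfolding K x_def sum.lessThan_Suc_shift by (simp add: sum_distrib_left sum_divide_distrib)
  have sc: "(\<Sum>k<Suc l. real (\<gamma> k) / 2 ^ (k+1)) = real (\<gamma> 0) / 2 + c / 2"
    unfolding c_def sum.lessThan_Suc_shift by (simp add: sum_distrib_left sum_divide_distrib)
  have IH: "(c \<le> x \<and> x < c + 1 / 2 ^ l) \<longleftrightarrow> (\<forall>k<l. \<beta> (Suc k) = \<gamma> (Suc k))"
    unfolding x_def c_def using Suc.IH[of "\<lambda>k. \<beta> (Suc k)" "\<lambda>k. \<gamma> (Suc k)" K'] Suc.prems K by auto
  have x01: "0 \<le> x" "x < 1" unfolding x_def using sum_lt1[of "\<lambda>k. \<beta> (Suc k)" K'] sum_ge0 Suc.prems by auto
  have c01: "0 \<le> c" "c + 1 / 2 ^ l \<le> 1"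
  proof -
    show "0 \<le> c" unfolding c_def by (rule sum_ge0)
    have "c \<le> (\<Sum>k<l. 1 / 2 ^ (k+1))" unfolding c_def using Suc.prems
      by (intro sum_mono) (auto simp: divide_right_mono)
    also have "\<dots> = 1 - 1 / 2 ^ l" by (induction l) (auto simp: field_simps)
    finally show "c + 1 / 2 ^ l \<le> 1" by simp
  qed
  have all: "(\<forall>k<Suc l. \<beta> k = \<gamma> k) \<longleftrightarrow> \<beta> 0 = \<gamma> 0 \<and> (\<forall>k<l. \<beta> (Suc k) = \<gamma> (Suc k))"
    by (auto simp: less_Suc_eq_0_disj)
  have p: "(1::real) / 2 ^ Suc l = (1 / 2 ^ l) / 2" by simp
  have b0: "\<beta> 0 = 0 \<or> \<beta> 0 = 1" "\<gamma> 0 = 0 \<or> \<gamma> 0 = 1" using Suc.prems(1,2) le_Suc_eq by (metis One_nat_def le_zero_eq)+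
  define t where "t = (1::real) / 2 ^ l"
  have t0: "t > 0" unfolding t_def by simp
  have IH': "(c \<le> x \<and> x < c + t) \<longleftrightarrow> (\<forall>k<l. \<beta> (Suc k) = \<gamma> (Suc k))" using IH t_def by simp
  have c01': "c + t \<le> 1" using c01 t_def by simp
  show ?case unfolding sx sc all p t_def[symmetric]
  proof -
    consider "\<beta> 0 = 0" "\<gamma> 0 = 0" | "\<beta> 0 = 1" "\<gamma> 0 = 1" | "\<beta> 0 = 0" "\<gamma> 0 = 1" | "\<beta> 0 = 1" "\<gamma> 0 = 0"
      using b0 by fastforce
    then show "(real (\<gamma> 0) / 2 + c / 2 \<le> real (\<beta> 0) / 2 + x / 2 \<and>
     real (\<beta> 0) / 2 + x / 2 < real (\<gamma> 0) / 2 + c / 2 + t / 2) =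
    (\<beta> 0 = \<gamma> 0 \<and> (\<forall>k<l. \<beta> (Suc k) = \<gamma> (Suc k)))"
    proof cases
      case 1 then show ?thesis using IH' by auto
    next
      case 2 then show ?thesis using IH' by auto
    next
      case 3 then show ?thesis using x01 c01 c01' t0 by auto
    next
      case 4 then show ?thesis using x01 c01 c01' t0 by auto
    qed
  qed
qed



lemma digit_less: "0 < B \<Longrightarrow> digit B k m < B" by (simp add: digit_def)

lemma digit_zero: assumes "1 \<le> d" "Suc m \<le> k" shows "digit (2^d) k m = 0"
proof -
  have "m < 2 ^ k" using assms(2) less_exp[of k] by linarith
  also have "(2::nat) ^ k \<le> (2^d)^k" using assms(1)
  proof (intro power_mono)
    show "2 \<le> (2::nat)^d" using assms(1) by (metis power_increasing power_one_right pos2 one_le_numeral One_nat_def)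
  qed simp
  finally show ?thesis by (simp add: digit_def)
qed

lemma mem_cube:
  assumes d: "1 \<le> d" and u: "u \<in> words d l"
  shows "xpt d (Suc m) \<in> cube d u \<longleftrightarrow> m mod (2^d) ^ l = vl (2^d) u"
proof -
  let ?b = "(2::nat)^d"
  have lu: "length u = l" and su: "set u \<subseteq> {..<?b}" using u by (auto simp: words_def)
  define K where "K = max (Suc m) l"
  have X: "(\<Sum>k<Suc m. real (eps j (digit ?b k m)) / 2 ^ (k + 1)) =
           (\<Sum>k<K. real (eps j (digit ?b k m)) / 2 ^ (k + 1))" for j
    unfolding K_def
    by (rule sum.mono_neutral_left) (auto simp: digit_zero[OF d] eps_def)
  have "xpt d (Suc m) \<in> cube d u \<longleftrightarrow>
     (\<forall>j\<in>{1..d}. corner u j \<le> (\<Sum>k<K. real (eps j (digit ?b k m)) / 2 ^ (k + 1)) \<and>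
        (\<Sum>k<K. real (eps j (digit ?b k m)) / 2 ^ (k + 1)) < corner u j + 1 / 2 ^ l)"
    unfolding cube_def hbox_def xpt_def using X lu by (auto simp: PiE_iff)
  also have "\<dots> \<longleftrightarrow> (\<forall>j\<in>{1..d}. \<forall>k<l. eps j (digit ?b k m) = eps j (u ! k))"
  proof -
    have "(corner u j \<le> (\<Sum>k<K. real (eps j (digit ?b k m)) / 2 ^ (k + 1)) \<and>
        (\<Sum>k<K. real (eps j (digit ?b k m)) / 2 ^ (k + 1)) < corner u j + 1 / 2 ^ l)
        \<longleftrightarrow> (\<forall>k<l. eps j (digit ?b k m) = eps j (u ! k))" for j
      unfolding corner_def lu
      by (rule bin[of "\<lambda>k. eps j (digit ?b k m)" "\<lambda>k. eps j (u ! k)" l K]) (auto simp: eps_le1[unfolded One_nat_def] K_def)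
    then show ?thesis by auto
  qed
  also have "\<dots> \<longleftrightarrow> (\<forall>k<l. digit ?b k m = u ! k)"
  proof
    assume h: "\<forall>j\<in>{1..d}. \<forall>k<l. eps j (digit ?b k m) = eps j (u ! k)"
    show "\<forall>k<l. digit ?b k m = u ! k"
    proof (intro allI impI)
      fix k assume k: "k < l"
      have "u ! k < ?b" using su k lu nth_mem by fastforce
      moreover have "digit ?b k m < ?b" by (simp add: digit_less)
      ultimately show "digit ?b k m = u ! k" using h k eps_eq_imp_eq by blast
    qed
  qed auto
  also have "\<dots> \<longleftrightarrow> m mod ?b ^ l = vl ?b u" using digits_iff[OF su, of m] lu by simp
  finally show ?thesis .
qed

definition KK :: "nat \<Rightarrow> nat \<Rightarrow> nat list \<Rightarrow> nat" where
  "KK d N u = N div (2^d) ^ length u + (if vl (2^d) u < N mod (2^d) ^ length u then 1 else 0)"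

lemma Mcount_KK:
  assumes d: "1 \<le> d" and u: "u \<in> words d l"
  shows "Mcount d N u = KK d N u"
proof -
  let ?b = "(2::nat)^d"
  have lu: "length u = l" and su: "set u \<subseteq> {..<?b}" using u by (auto simp: words_def)
  have "{n \<in> {1..N}. xpt d n \<in> cube d u} = Suc ` {m. m < N \<and> m mod ?b ^ l = vl ?b u}"
  proof (rule set_eqI)
    fix n
    show "n \<in> {n \<in> {1..N}. xpt d n \<in> cube d u} \<longleftrightarrow> n \<in> Suc ` {m. m < N \<and> m mod ?b ^ l = vl ?b u}"
    proof (cases n)
      case 0 then show ?thesis by auto
    next
      case (Suc m) then show ?thesis using mem_cube[OF d u, of m] by auto
    qed
  qed
  then have "Mcount d N u = card {m. m < N \<and> m mod ?b ^ l = vl ?b u}"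
    unfolding Mcount_def by (simp add: card_image)
  also have "\<dots> = KK d N u" unfolding KK_def lu
    by (rule card_mod) (use vl_less[OF su] lu in auto)
  finally show ?thesis .
qed



definition gg :: "nat \<Rightarrow> nat \<Rightarrow> nat \<Rightarrow> nat \<Rightarrow> nat" where
  "gg q r j c = 2^j * q + min (2^j) (r - c * 2^j)"

definition qq :: "nat \<Rightarrow> nat \<Rightarrow> nat \<Rightarrow> nat" where
  "qq d N l = N div (2^d) ^ Suc l"

definition rr :: "nat \<Rightarrow> nat \<Rightarrow> nat list \<Rightarrow> nat" where
  "rr d N u = (N mod (2^d) ^ Suc (length u)) div (2^d) ^ length u
      + (if vl (2^d) u < N mod (2^d) ^ length u then 1 else 0)"

lemma min_split: "min h y + min h (y - h) = min (2*h) (y::nat)" by auto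

lemma gg_split:
  "gg q r i (2*c) + gg q r i (2*c+1) = gg q r (Suc i) c"
proof -
  have e: "r - (2*c+1) * 2^i = (r - 2*c*2^i) - 2^i" by (simp add: algebra_simps)
  have e2: "r - c * 2 ^ Suc i = r - 2*c*2^i" by (simp add: algebra_simps)
  show ?thesis unfolding gg_def e e2 using min_split[of "2^i" "r - 2*c*2^i"]
    by (simp add: algebra_simps)
qed

lemma gg_half:
  "gg q r (Suc i) c \<le> 2 * gg q r i (2*c)"
  "2 * q * (2 * gg q r i (2*c) - gg q r (Suc i) c) \<le> gg q r (Suc i) c"
proof -
  define h where "h = (2::nat)^i"
  define y where "y = r - 2*c*2^i"
  have e2: "r - c * 2 ^ Suc i = y" unfolding y_def by (simp add: algebra_simps)
  have e3: "r - 2 * c * 2 ^ i = y" unfolding y_def by simp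
  have A: "gg q r (Suc i) c = 2*h*q + min (2*h) y" unfolding gg_def e2 h_def by simp
  have B: "gg q r i (2*c) = h*q + min h y" unfolding gg_def h_def y_def by (simp add: algebra_simps)
  show "gg q r (Suc i) c \<le> 2 * gg q r i (2*c)" unfolding A B by auto
  have "2 * gg q r i (2*c) - gg q r (Suc i) c = 2 * min h y - min (2*h) y" unfolding A B by auto
  also have "\<dots> \<le> h" by auto
  finally have "2 * q * (2 * gg q r i (2*c) - gg q r (Suc i) c) \<le> 2 * q * h" by simp
  also have "\<dots> \<le> gg q r (Suc i) c" unfolding A by simp
  finally show "2 * q * (2 * gg q r i (2*c) - gg q r (Suc i) c) \<le> gg q r (Suc i) c" .
qed

lemma gg_pos: "0 < q \<Longrightarrow> 0 < gg q r j c" by (simp add: gg_def)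

lemma gg_0: "gg q r 0 a = q + (if a < r then 1 else 0)" by (simp add: gg_def)

lemma gg_top: "r \<le> 2^d \<Longrightarrow> gg q r d 0 = 2^d * q + r" by (simp add: gg_def)

lemma key_ineq:
  fixes v B s a t :: nat
  assumes "v < B" "s < B"
  shows "(v + B*a < B*t + s) \<longleftrightarrow> (a < t + (if v < s then 1 else 0))"
proof (cases a t rule: linorder_cases)
  case less
  then have "B * (a+1) \<le> B * t" by (intro mult_le_mono2) simp
  then show ?thesis using less assms by auto
next
  case equal then show ?thesis by auto
next
  case greater
  then have "B * (t+1) \<le> B * a" by (intro mult_le_mono2) simp
  then show ?thesis using greater assms by auto
qed

lemma KK_snoc:
  assumes u: "u \<in> words d l" and a: "a < 2^d"
  shows "KK d N (u @ [a]) = qq d N l + (if a < rr d N u then 1 else 0)"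
proof -
  let ?b = "(2::nat)^d"
  have lu: "length u = l" and su: "set u \<subseteq> {..<?b}" using u by (auto simp: words_def)
  define B where "B = ?b ^ l"
  define v where "v = vl ?b u"
  have vB: "v < B" unfolding v_def B_def using vl_less[OF su] lu by simp
  have B0: "0 < B" unfolding B_def by simp
  have pw: "?b ^ Suc l = B * ?b" unfolding B_def by (simp add: power_Suc2)
  have m: "N mod (B * ?b) = B * (N div B mod ?b) + N mod B" by (rule mod_mult2_eq)
  have r: "rr d N u = N div B mod ?b + (if v < N mod B then 1 else 0)"
    unfolding rr_def lu pw m B_def[symmetric] v_def[symmetric] using B0 by simp
  have "KK d N (u @ [a]) = N div (B * ?b) + (if v + B * a < N mod (B * ?b) then 1 else 0)"
    unfolding KK_def using lu by (simp add: vl_snoc pw v_def B_def mult.commute)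
  also have "(v + B * a < N mod (B * ?b)) \<longleftrightarrow> a < rr d N u"
    unfolding m r by (rule key_ineq) (use vB B0 in auto)
  finally show ?thesis unfolding qq_def pw by simp
qed

lemma KK_rr:
  assumes u: "u \<in> words d l"
  shows "KK d N u = 2^d * qq d N l + rr d N u" "rr d N u \<le> 2^d"
proof -
  let ?b = "(2::nat)^d"
  have lu: "length u = l" and su: "set u \<subseteq> {..<?b}" using u by (auto simp: words_def)
  define B where "B = ?b ^ l"
  define v where "v = vl ?b u"
  have B0: "0 < B" unfolding B_def by simp
  have pw: "?b ^ Suc l = B * ?b" unfolding B_def by (simp add: power_Suc2)
  have m: "N mod (B * ?b) = B * (N div B mod ?b) + N mod B" by (rule mod_mult2_eq)
  have r: "rr d N u = N div B mod ?b + (if v < N mod B then 1 else 0)"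
    unfolding rr_def lu pw m B_def[symmetric] v_def[symmetric] using B0 by simp
  have dv: "N div B = ?b * (N div (B * ?b)) + N div B mod ?b"
    by (simp add: div_mult2_eq)
  show "KK d N u = 2^d * qq d N l + rr d N u"
    unfolding KK_def r qq_def pw lu B_def[symmetric] v_def[symmetric]
    by (subst dv) simp
  have "N div B mod ?b < ?b" by simp
  then show "rr d N u \<le> 2^d" unfolding r by (auto simp: Suc_le_eq)
qed



definition ff :: "nat \<Rightarrow> nat \<Rightarrow> nat \<Rightarrow> nat \<Rightarrow> real" where
  "ff q r j c = real (gg q r (j-1) (2*c)) / real (gg q r j c)"

definition pt :: "nat \<Rightarrow> nat \<Rightarrow> (nat \<Rightarrow> real) \<Rightarrow> (nat \<Rightarrow> real) \<Rightarrow> nat \<Rightarrow> nat \<Rightarrow> real" where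
  "pt q r lo hi j c = lo j + ff q r j c * (hi j - lo j)"

definition child :: "nat \<Rightarrow> nat \<Rightarrow> nat \<Rightarrow> (nat\<Rightarrow>real)\<times>(nat\<Rightarrow>real) \<Rightarrow> (nat\<Rightarrow>real)\<times>(nat\<Rightarrow>real)" where
  "child q r a lh = ((\<lambda>j. if eps j a = 0 then fst lh j else pt q r (fst lh) (snd lh) j (a div 2^j)),
                    (\<lambda>j. if eps j a = 0 then pt q r (fst lh) (snd lh) j (a div 2^j) else snd lh j))"

lemma ff_bounds:
  assumes q: "0 < q" and j: "1 \<le> j"
  shows "1/2 \<le> ff q r j c" "ff q r j c \<le> 1" "ff q r j c - 1/2 \<le> 1 / (4 * real q)"
proof -
  obtain i where ji: "j = Suc i" using j by (cases j) auto
  define G where "G = gg q r (Suc i) c"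
  define G1 where "G1 = gg q r i (2*c)"
  have G0: "0 < G" unfolding G_def by (rule gg_pos[OF q])
  have h1: "G \<le> 2 * G1" unfolding G_def G1_def by (rule gg_half(1))
  have h2: "2 * q * (2 * G1 - G) \<le> G" unfolding G_def G1_def by (rule gg_half(2))
  have h3: "G1 \<le> G" unfolding G_def G1_def using gg_split[of q r i c] by linarith
  have f: "ff q r j c = real G1 / real G" unfolding ff_def ji G_def G1_def by simp
  have rG: "real G \<le> 2 * real G1" using h1 by linarith
  show "1/2 \<le> ff q r j c" unfolding f using G0 rG by (simp add: field_simps)
  show "ff q r j c \<le> 1" unfolding f using G0 h3 by (simp add: field_simps)
  have "real (2 * q * (2 * G1 - G)) \<le> real G" using h2 by linarith
  then have "2 * real q * (2 * real G1 - real G) \<le> real G" using h1 by (simp add: of_nat_diff)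
  then show "ff q r j c - 1/2 \<le> 1 / (4 * real q)" unfolding f using G0 q by (simp add: field_simps)
qed

lemma div_step: "a div 2 ^ i = 2 * (a div 2 ^ Suc i) + eps (Suc i) a"
proof -
  have "a div 2^Suc i = a div 2^i div 2" by (metis div_mult2_eq power_Suc2)
  then show ?thesis by (simp add: eps_def)
qed

lemma telescope:
  fixes G :: "nat \<Rightarrow> real"
  assumes "\<And>j. G j \<noteq> 0"
  shows "(\<Prod>j\<in>{1..n}. G (j-1) / G j) = G 0 / G n"
proof (induction n)
  case 0 then show ?case using assms by simp
next
  case (Suc n)
  have "{1..Suc n} = insert (Suc n) {1..n}" by auto
  then have "(\<Prod>j\<in>{1..Suc n}. G (j-1) / G j) = G n / G (Suc n) * (\<Prod>j\<in>{1..n}. G (j-1) / G j)"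
    by simp
  then show ?case using Suc.IH assms by simp
qed

lemma child_side:
  assumes q: "0 < q" and j: "1 \<le> j"
  shows "snd (child q r a (lo,hi)) j - fst (child q r a (lo,hi)) j =
     (hi j - lo j) * (real (gg q r (j-1) (a div 2^(j-1))) / real (gg q r j (a div 2^j)))"
proof -
  obtain i where ji: "j = Suc i" using j by (cases j) auto
  define c where "c = a div 2 ^ Suc i"
  have G0: "0 < real (gg q r (Suc i) c)" using gg_pos[OF q] by simp
  have ds: "a div 2 ^ i = 2 * c + eps (Suc i) a" unfolding c_def by (rule div_step)
  show ?thesis
  proof (cases "eps j a = 0")
    case True
    have ds0: "a div 2 ^ i = 2 * c" using ds True ji by simp
    have "snd (child q r a (lo,hi)) j - fst (child q r a (lo,hi)) j = (hi j - lo j) * ff q r (Suc i) c"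
      unfolding child_def pt_def using True ji by (simp add: c_def algebra_simps)
    then show ?thesis unfolding ff_def using ds0 ji by (simp add: c_def)
  next
    case False
    then have e1: "eps j a = 1" using eps_cases[of j a] by simp
    have sp: "real (gg q r i (2*c)) + real (gg q r i (2*c+1)) = real (gg q r (Suc i) c)"
      using gg_split[of q r i c] by (metis of_nat_add)
    have "1 - ff q r (Suc i) c = real (gg q r i (2*c+1)) / real (gg q r (Suc i) c)"
      unfolding ff_def using G0 sp by (simp add: field_simps)
    moreover have "snd (child q r a (lo,hi)) j - fst (child q r a (lo,hi)) j = (hi j - lo j) * (1 - ff q r (Suc i) c)"
      unfolding child_def pt_def using False ji by (simp add: c_def algebra_simps)
    ultimately show ?thesis using ds e1 ji by (simp add: c_def)
  qed
qed

lemma child_vol: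
  assumes q: "0 < q" and a: "a < 2^d"
  shows "(\<Prod>j\<in>{1..d}. snd (child q r a (lo,hi)) j - fst (child q r a (lo,hi)) j) =
     (\<Prod>j\<in>{1..d}. hi j - lo j) * (real (gg q r 0 a) / real (gg q r d 0))"
proof -
  define G where "G j = real (gg q r j (a div 2^j))" for j
  have "(\<Prod>j\<in>{1..d}. snd (child q r a (lo,hi)) j - fst (child q r a (lo,hi)) j) =
        (\<Prod>j\<in>{1..d}. (hi j - lo j) * (G (j-1) / G j))"
    unfolding G_def by (intro prod.cong refl child_side[OF q]) auto
  also have "\<dots> = (\<Prod>j\<in>{1..d}. hi j - lo j) * (\<Prod>j\<in>{1..d}. G (j-1) / G j)"
    by (rule prod.distrib)
  also have "(\<Prod>j\<in>{1..d}. G (j-1) / G j) = G 0 / G d"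
    by (rule telescope) (use gg_pos[OF q] in \<open>auto simp: G_def\<close>)
  finally show ?thesis using a by (simp add: G_def)
qed

lemma pt_between:
  assumes q: "0 < q" "1 \<le> j" and "lo j \<le> hi j"
  shows "lo j \<le> pt q r lo hi j c" "pt q r lo hi j c \<le> hi j"
proof -
  have "0 \<le> ff q r j c" "ff q r j c \<le> 1" using ff_bounds[OF q, of r c] by auto
  then have "0 \<le> ff q r j c * (hi j - lo j)" "ff q r j c * (hi j - lo j) \<le> hi j - lo j"
    using assms(3) by (auto simp: mult_left_le_one_le)
  then show "lo j \<le> pt q r lo hi j c" "pt q r lo hi j c \<le> hi j" unfolding pt_def by auto
qed

lemma child_mem:
  assumes q: "0 < q" and lh: "\<And>j. j \<in> {1..d} \<Longrightarrow> lo j \<le> hi j"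
  shows "x \<in> hbox d (fst (child q r a (lo,hi))) (snd (child q r a (lo,hi))) \<longleftrightarrow>
     x \<in> hbox d lo hi \<and> (\<forall>j\<in>{1..d}. x j < pt q r lo hi j (a div 2^j) \<longleftrightarrow> eps j a = 0)"
proof -
  have c: "(fst (child q r a (lo,hi)) j \<le> x j \<and> x j < snd (child q r a (lo,hi)) j) \<longleftrightarrow>
        (lo j \<le> x j \<and> x j < hi j) \<and> (x j < pt q r lo hi j (a div 2^j) \<longleftrightarrow> eps j a = 0)"
    if j: "j \<in> {1..d}" for j
  proof -
    have "lo j \<le> pt q r lo hi j (a div 2^j)" "pt q r lo hi j (a div 2^j) \<le> hi j"
      using pt_between[OF q, of j lo hi r] lh[OF j] j by auto
    then show ?thesis unfolding child_def using eps_cases[of j a] by auto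
  qed
  show ?thesis unfolding hbox_def PiE_iff using c by auto
qed

lemma child_unique:
  assumes a: "a < 2^d" and a': "a' < 2^d"
    and ha: "\<forall>j\<in>{1..d}. x j < P j (a div 2^j) \<longleftrightarrow> eps j a = 0"
    and ha': "\<forall>j\<in>{1..d}. x j < P j (a' div 2^j) \<longleftrightarrow> eps j a' = 0"
  shows "a = a'"
proof -
  have "i \<le> d \<Longrightarrow> a div 2^(d-i) = a' div 2^(d-i)" for i
  proof (induction i)
    case 0 then show ?case using a a' by simp
  next
    case (Suc i)
    define j where "j = d - i"
    have j: "j \<in> {1..d}" "d - Suc i = j - 1" using Suc.prems unfolding j_def by auto
    have IH: "a div 2^j = a' div 2^j" using Suc unfolding j_def by simp
    have "eps j a = eps j a'" using ha ha' j(1) IH eps_cases[of j a] eps_cases[of j a'] by metis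
    moreover obtain i' where "j = Suc i'" using j by (cases j) auto
    ultimately show ?case using IH div_step[of a i'] div_step[of a' i'] j(2) by simp
  qed
  from this[of d] show ?thesis by simp
qed

fun cc :: "nat \<Rightarrow> (nat \<Rightarrow> real) \<Rightarrow> (nat \<Rightarrow> nat \<Rightarrow> real) \<Rightarrow> nat \<Rightarrow> nat" where
  "cc d x P 0 = 0"
| "cc d x P (Suc i) = 2 * cc d x P i + (if x (d - i) < P (d - i) (cc d x P i) then 0 else 1)"

lemma cc_less: "cc d x P i < 2 ^ i"
  by (induction i) auto

lemma cc_div: "cc d x P (i + k) div 2 ^ k = cc d x P i"
proof (induction k)
  case 0 then show ?case by simp
next
  case (Suc k)
  have "cc d x P (i + Suc k) div 2 ^ Suc k = cc d x P (i + Suc k) div 2 div 2 ^ k"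
    by (simp add: div_mult2_eq)
  also have "cc d x P (i + Suc k) div 2 = cc d x P (i + k)" by simp
  finally show ?case using Suc by simp
qed

lemma child_exists:
  fixes x :: "nat \<Rightarrow> real" and P :: "nat \<Rightarrow> nat \<Rightarrow> real"
  shows "\<exists>a < 2^d. \<forall>j\<in>{1..d}. x j < P j (a div 2^j) \<longleftrightarrow> eps j a = 0"
proof (intro exI conjI)
  define a where "a = cc d x P d"
  show "a < 2 ^ d" unfolding a_def by (rule cc_less)
  show "\<forall>j\<in>{1..d}. x j < P j (a div 2^j) \<longleftrightarrow> eps j a = 0"
  proof
    fix j assume j: "j \<in> {1..d}"
    have e1: "cc d x P d = cc d x P ((d-j) + j)" using j by simp
    have d1: "a div 2^j = cc d x P (d - j)" unfolding a_def e1 cc_div by (rule refl)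
    have e2: "cc d x P d = cc d x P (Suc (d-j) + (j-1))" using j by simp
    have d2: "a div 2^(j-1) = cc d x P (Suc (d - j))" unfolding a_def e2 cc_div by (rule refl)
    have dj: "d - (d - j) = j" using j by simp
    have "eps j a = (a div 2^(j-1)) mod 2" by (simp add: eps_def)
    also have "\<dots> = (if x j < P j (a div 2^j) then 0 else 1)" unfolding d2 d1 cc.simps dj by simp
    finally show "x j < P j (a div 2^j) \<longleftrightarrow> eps j a = 0" by simp
  qed
qed



fun bxr :: "nat \<Rightarrow> nat \<Rightarrow> nat list \<Rightarrow> (nat\<Rightarrow>real)\<times>(nat\<Rightarrow>real)" where
  "bxr d N [] = (\<lambda>_. 0, \<lambda>_. 1)"
| "bxr d N (a # rv) = child (qq d N (length rv)) (rr d N (rev rv)) a (bxr d N rv)"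

definition bx :: "nat \<Rightarrow> nat \<Rightarrow> nat list \<Rightarrow> (nat\<Rightarrow>real)\<times>(nat\<Rightarrow>real)" where
  "bx d N u = bxr d N (rev u)"

lemma bx_Nil: "bx d N [] = (\<lambda>_. 0, \<lambda>_. 1)" by (simp add: bx_def)
lemma bx_snoc: "bx d N (u @ [a]) = child (qq d N (length u)) (rr d N u) a (bx d N u)"
  by (simp add: bx_def)

lemma words_snoc: "u @ [a] \<in> words d (Suc l) \<longleftrightarrow> u \<in> words d l \<and> a < 2^d"
  by (auto simp: words_def)

lemma words_Suc: "v \<in> words d (Suc l) \<Longrightarrow> \<exists>u a. v = u @ [a] \<and> u \<in> words d l \<and> a < 2^d"
proof -
  assume v: "v \<in> words d (Suc l)"
  then have "v \<noteq> []" by (auto simp: words_def)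
  then obtain u a where "v = u @ [a]" by (metis rev_exhaust)
  then show ?thesis using v words_snoc by blast
qed

lemma words_0: "words d 0 = {[]}" by (auto simp: words_def)

lemma corner_snoc: "corner (u @ [a]) j = corner u j + real (eps j a) / 2 ^ Suc (length u)"
  by (simp add: corner_def nth_append)

lemma Ssum_Suc: "Ssum d N (Suc l) = Ssum d N l + Delta d N l"
  by (simp add: Ssum_def)

lemma Delta_nonneg: "0 \<le> Delta d N l" by (simp add: Delta_def)

lemma Ssum_le_Delta: assumes "2 \<le> d" shows "Ssum d N l \<le> Delta d N l"
proof (induction l)
  case 0 then show ?case by (simp add: Ssum_def Delta_nonneg)
next
  case (Suc l)
  have "Suc l * (d - 1) = l * (d - 1) + (d - 1)" by simp
  then have "Delta d N (Suc l) = Delta d N l * 2 ^ (d - 1)"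
    unfolding Delta_def by (simp only: power_add)
  moreover have "(2::real)^1 \<le> 2 ^ (d - 1)" using assms by (intro power_increasing) auto
  moreover have "Delta d N l * 2 \<le> Delta d N l * 2 ^ (d - 1)"
    using Delta_nonneg[of d N l] calculation(2) by (intro mult_left_mono) auto
  ultimately have "2 * Delta d N l \<le> Delta d N (Suc l)" by simp
  then show ?case using Suc Ssum_Suc[of d N l] by linarith
qed

lemma arith_main:
  assumes d: "2 \<le> d" and q: "q = N div (2^d) ^ Suc l" and qb: "2^d \<le> q"
    and w: "w \<le> 1 / 2^l + 2 * Delta d N l"
  shows "w / (4 * real q) \<le> Delta d N l"
proof -
  define B where "B = ((2::nat)^d) ^ Suc l"
  define T where "T = (2::real)^(2*d-3) * 2^(l*(d-1))"
  have B0: "0 < B" unfolding B_def by simp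
  have "(2::nat)^1 \<le> 2^d" using d by (intro power_increasing) auto
  then have q2: "2 \<le> q" using qb by simp
  have N0: "0 < N" using q q2 by (cases "N = 0") auto
  have NB: "N < (q + 1) * B"
  proof -
    have "N = q * B + N mod B" unfolding q B_def by (metis div_mult_mod_eq)
    moreover have "N mod B < B" using B0 by simp
    ultimately show ?thesis by (simp add: algebra_simps)
  qed
  have ex: "2*d-3 + l*(d-1) + l + 3 = d * (l + 2)" using d
    by (cases d) (auto simp: algebra_simps)
  have TB: "T * 2^l * 8 = real (2^d) * real B"
  proof -
    have "T * 2^l * 8 = (2::real)^(2*d-3 + l*(d-1) + l + 3)" unfolding T_def by (simp add: power_add)
    also have "\<dots> = (2::real)^(d * (l+2))" using ex by simp
    also have "\<dots> = real (2^d) * real B" unfolding B_def by (simp add: power_mult power_add power_Suc)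
    finally show ?thesis .
  qed
  have Dl: "Delta d N l = T / real N" unfolding Delta_def T_def by simp
  have b4: "(4::real) \<le> real (2^d)"
  proof -
    have "(2::nat)^2 \<le> 2^d" using d by (intro power_increasing) auto
    then have "(4::nat) \<le> 2^d" by simp
    then show ?thesis by (simp only: of_nat_le_iff[symmetric])
  qed
  have "8 * real N \<le> (4 * real q - 2) * (real (2^d) * real B)"
  proof -
    have "real N < real ((q + 1) * B)" using NB by (simp only: of_nat_less_iff)
    then have "real N \<le> (real q + 1) * real B" by (simp add: algebra_simps)
    moreover have "8 * ((real q + 1) * real B) \<le> (4 * real q - 2) * (real (2^d) * real B)"
    proof -
      have "2 \<le> real q" using q2 by simp
      then have "8 * (real q + 1) \<le> (4 * real q - 2) * 4" by (simp add: algebra_simps)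
      also have "\<dots> \<le> (4 * real q - 2) * real (2^d)" using b4 q2 by (intro mult_left_mono) auto
      finally have "8 * (real q + 1) * real B \<le> (4 * real q - 2) * real (2^d) * real B"
        by (intro mult_right_mono) auto
      then show ?thesis by (simp add: algebra_simps)
    qed
    ultimately show ?thesis by linarith
  qed
  then have "8 * real N \<le> (4 * real q - 2) * (T * 2^l * 8)" unfolding TB .
  then have key: "1 / 2^l \<le> (4 * real q - 2) * Delta d N l"
    unfolding Dl using N0 by (simp add: field_simps)
  have "w \<le> 4 * real q * Delta d N l" using w key by (simp add: algebra_simps)
  then show ?thesis using q2 by (simp add: field_simps)
qed

lemma coord_step:
  fixes lo hi A S h f D p :: real and e :: nat
  assumes "0 \<le> lo" "lo \<le> hi" "hi \<le> 1" "\<bar>lo - A\<bar> \<le> S" "\<bar>hi - (A + h)\<bar> \<le> S"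
    "1/2 \<le> f" "f \<le> 1" "(f - 1/2) * (hi - lo) \<le> D" "e = 0 \<or> e = 1"
    "p = lo + f * (hi - lo)"
  shows "0 \<le> (if e = 0 then lo else p) \<and> (if e = 0 then lo else p) \<le> (if e = 0 then p else hi)
     \<and> (if e = 0 then p else hi) \<le> 1
     \<and> \<bar>(if e = 0 then lo else p) - (A + real e * (h / 2))\<bar> \<le> S + D
     \<and> \<bar>(if e = 0 then p else hi) - (A + real e * (h / 2) + h / 2)\<bar> \<le> S + D"
proof -
  define E where "E = (f - 1/2) * (hi - lo)"
  have E0: "0 \<le> E" unfolding E_def using assms by auto
  have ED: "E \<le> D" unfolding E_def using assms by auto
  have "E = f * (hi - lo) - (hi - lo) / 2" unfolding E_def by (simp add: algebra_simps)
  then have pE: "p = (lo + hi) / 2 + E" using assms(10) by (simp add: field_simps)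
  have fh: "f * (hi - lo) \<le> hi - lo" using assms by (simp add: mult_left_le_one_le)
  have fh0: "0 \<le> f * (hi - lo)" using assms by simp
  have p1: "lo \<le> p" "p \<le> hi" using fh fh0 assms(10) by auto
  have a4: "-S \<le> lo - A" "lo - A \<le> S" using assms(4) by (simp_all add: abs_le_iff)
  have a5: "-S \<le> hi - (A + h)" "hi - (A + h) \<le> S" using assms(5) by (simp_all add: abs_le_iff)
  show ?thesis using assms(9)
  proof
    assume e: "e = 0"
    have "\<bar>p - (A + h / 2)\<bar> \<le> S + D" unfolding abs_le_iff using a4 a5 pE E0 ED by (simp add: field_simps)
    then show ?thesis using e assms(1,2,3) p1 a4 ED E0 by (simp add: abs_le_iff)
  next
    assume e: "e = 1"
    have "\<bar>p - (A + h / 2)\<bar> \<le> S + D" unfolding abs_le_iff using a4 a5 pE E0 ED by (simp add: field_simps)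
    moreover have "\<bar>hi - (A + h / 2 + h / 2)\<bar> \<le> S + D" unfolding abs_le_iff using a5 E0 ED by (simp add: field_simps)
    ultimately show ?thesis using e assms(1,2,3) p1 by simp
  qed
qed



lemma qq_ge:
  assumes "((2::nat)^d) ^ Suc (Suc l) \<le> N"
  shows "2^d \<le> qq d N l"
proof -
  have "2^d * (2^d)^Suc l \<le> N" using assms by (simp only: power_Suc)
  then show ?thesis unfolding qq_def by (simp add: less_eq_div_iff_mult_less_eq)
qed

lemma inv:
  assumes d: "2 \<le> d"
  shows "u \<in> words d l \<Longrightarrow> ((2::nat)^d) ^ Suc l \<le> N \<Longrightarrow>
         (\<forall>j\<in>{1..d}. 0 \<le> fst (bx d N u) j \<and> fst (bx d N u) j \<le> snd (bx d N u) j \<and> snd (bx d N u) j \<le> 1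
           \<and> \<bar>fst (bx d N u) j - corner u j\<bar> \<le> Ssum d N l
           \<and> \<bar>snd (bx d N u) j - (corner u j + 1 / 2 ^ l)\<bar> \<le> Ssum d N l)
         \<and> (\<Prod>j\<in>{1..d}. snd (bx d N u) j - fst (bx d N u) j) = real (KK d N u) / real N"
proof (induction l arbitrary: u)
  case 0
  then have u: "u = []" by (simp add: words_def)
  have N0: "0 < N" using 0 by (metis le_zero_eq not_gr0 power_not_zero zero_neq_numeral)
  show ?case using N0 unfolding u by (simp add: bx_Nil corner_def Ssum_def KK_def)
next
  case (Suc l)
  obtain v a where v: "u = v @ [a]" "v \<in> words d l" "a < 2^d" using words_Suc[OF Suc.prems(1)] by blast
  have lv: "length v = l" using v by (simp add: words_def)
  have "((2::nat)^d) ^ Suc l \<le> ((2::nat)^d) ^ Suc (Suc l)" by (intro power_increasing) auto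
  then have Nl: "((2::nat)^d) ^ Suc l \<le> N" using Suc.prems(2) by linarith
  note IH = Suc.IH[OF v(2) Nl]
  define q where "q = qq d N l"
  define r where "r = rr d N v"
  define lo where "lo = fst (bx d N v)"
  define hi where "hi = snd (bx d N v)"
  have qb: "2^d \<le> q" unfolding q_def by (rule qq_ge) (use Suc.prems(2) in simp)
  have q0: "0 < q" using qb by (metis le_trans not_gr0 le_zero_eq power_not_zero zero_neq_numeral)
  have bxu: "bx d N u = child q r a (lo, hi)" unfolding v bx_snoc lv q_def r_def lo_def hi_def by simp
  have N0: "0 < N" using Nl by (metis le_zero_eq not_gr0 power_not_zero zero_neq_numeral)
  have coord: "0 \<le> fst (bx d N u) j \<and> fst (bx d N u) j \<le> snd (bx d N u) j \<and> snd (bx d N u) j \<le> 1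
           \<and> \<bar>fst (bx d N u) j - corner u j\<bar> \<le> Ssum d N (Suc l)
           \<and> \<bar>snd (bx d N u) j - (corner u j + 1 / 2 ^ Suc l)\<bar> \<le> Ssum d N (Suc l)"
    if j: "j \<in> {1..d}" for j
  proof -
    have I: "0 \<le> lo j" "lo j \<le> hi j" "hi j \<le> 1" "\<bar>lo j - corner v j\<bar> \<le> Ssum d N l"
        "\<bar>hi j - (corner v j + 1 / 2 ^ l)\<bar> \<le> Ssum d N l"
      using IH j unfolding lo_def hi_def by auto
    define f where "f = ff q r j (a div 2^j)"
    have fb: "1/2 \<le> f" "f \<le> 1" "f - 1/2 \<le> 1 / (4 * real q)" unfolding f_def using ff_bounds[OF q0] j by auto
    have w: "hi j - lo j \<le> 1 / 2^l + 2 * Delta d N l"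
      using I(4,5) Ssum_le_Delta[OF d, of N l] by (simp add: abs_le_iff)
    have "(f - 1/2) * (hi j - lo j) \<le> 1 / (4 * real q) * (hi j - lo j)"
      using fb I by (intro mult_right_mono) auto
    also have "\<dots> = (hi j - lo j) / (4 * real q)" by simp
    also have "\<dots> \<le> Delta d N l" by (rule arith_main[OF d _ qb w]) (simp add: q_def qq_def)
    finally have E: "(f - 1/2) * (hi j - lo j) \<le> Delta d N l" .
    have st: "0 \<le> (if eps j a = 0 then lo j else pt q r lo hi j (a div 2^j))
       \<and> (if eps j a = 0 then lo j else pt q r lo hi j (a div 2^j)) \<le> (if eps j a = 0 then pt q r lo hi j (a div 2^j) else hi j)
       \<and> (if eps j a = 0 then pt q r lo hi j (a div 2^j) else hi j) \<le> 1
       \<and> \<bar>(if eps j a = 0 then lo j else pt q r lo hi j (a div 2^j)) - (corner v j + real (eps j a) * ((1 / 2^l) / 2))\<bar> \<le> Ssum d N l + Delta d N l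
       \<and> \<bar>(if eps j a = 0 then pt q r lo hi j (a div 2^j) else hi j) - (corner v j + real (eps j a) * ((1 / 2^l) / 2) + (1 / 2^l) / 2)\<bar> \<le> Ssum d N l + Delta d N l"
      by (rule coord_step[OF I fb(1,2) E eps_cases]) (simp add: pt_def f_def)
    have c1: "corner u j = corner v j + real (eps j a) * ((1 / 2^l) / 2)"
      unfolding v corner_snoc lv by simp
    have c2: "(1::real) / 2 ^ Suc l = (1 / 2^l) / 2" by simp
    have fc: "fst (bx d N u) j = (if eps j a = 0 then lo j else pt q r lo hi j (a div 2^j))"
      "snd (bx d N u) j = (if eps j a = 0 then pt q r lo hi j (a div 2^j) else hi j)"
      unfolding bxu child_def by simp_all
    show ?thesis unfolding fc c1 c2 Ssum_Suc using st by (simp add: add.assoc)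
  qed
  have KKv: "KK d N v = 2^d * q + r" "r \<le> 2^d" unfolding q_def r_def using KK_rr[OF v(2)] by auto
  have KKu: "KK d N u = q + (if a < r then 1 else 0)" unfolding v q_def r_def by (rule KK_snoc[OF v(2,3)])
  have Kv0: "0 < KK d N v" using KKv q0 by simp
  have "(\<Prod>j\<in>{1..d}. snd (bx d N u) j - fst (bx d N u) j)
        = (\<Prod>j\<in>{1..d}. hi j - lo j) * (real (gg q r 0 a) / real (gg q r d 0))"
    unfolding bxu by (rule child_vol[OF q0 v(3)])
  also have "\<dots> = real (KK d N v) / real N * (real (KK d N u) / real (KK d N v))"
    using IH unfolding lo_def hi_def gg_0 gg_top[OF KKv(2)] KKu KKv(1)[symmetric] by simp
  also have "\<dots> = real (KK d N u) / real N" using Kv0 by simp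
  finally show ?case using coord by blast
qed



lemma Nmono: "((2::nat)^d) ^ Suc (Suc l) \<le> N \<Longrightarrow> ((2::nat)^d) ^ Suc l \<le> N"
proof -
  assume h: "((2::nat)^d) ^ Suc (Suc l) \<le> N"
  have "((2::nat)^d) ^ Suc l \<le> ((2::nat)^d) ^ Suc (Suc l)" by (intro power_increasing) auto
  then show ?thesis using h by linarith
qed

lemma mem_child:
  assumes d: "2 \<le> d" and v: "v \<in> words d l" and N: "((2::nat)^d) ^ Suc (Suc l) \<le> N"
  shows "x \<in> hbox d (fst (bx d N (v @ [a]))) (snd (bx d N (v @ [a]))) \<longleftrightarrow>
     x \<in> hbox d (fst (bx d N v)) (snd (bx d N v)) \<and>
     (\<forall>j\<in>{1..d}. x j < pt (qq d N l) (rr d N v) (fst (bx d N v)) (snd (bx d N v)) j (a div 2^j) \<longleftrightarrow> eps j a = 0)"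
proof -
  have lv: "length v = l" using v by (simp add: words_def)
  have qb: "2^d \<le> qq d N l" by (rule qq_ge[OF N])
  have q0: "0 < qq d N l" using qb by (metis le_trans not_gr0 le_zero_eq power_not_zero zero_neq_numeral)
  have lh: "fst (bx d N v) j \<le> snd (bx d N v) j" if "j \<in> {1..d}" for j
    using inv[OF d v Nmono[OF N]] that by auto
  have e: "bx d N (v @ [a]) = child (qq d N l) (rr d N v) a (fst (bx d N v), snd (bx d N v))"
    unfolding bx_snoc lv by simp
  show ?thesis unfolding e by (rule child_mem[OF q0 lh])
qed

lemma part:
  assumes d: "2 \<le> d"
  shows "((2::nat)^d) ^ Suc l \<le> N \<Longrightarrow>
     (\<forall>x\<in>unitQ d. \<exists>u\<in>words d l. x \<in> hbox d (fst (bx d N u)) (snd (bx d N u)))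
   \<and> (\<forall>u\<in>words d l. \<forall>v\<in>words d l. u \<noteq> v \<longrightarrow>
        hbox d (fst (bx d N u)) (snd (bx d N u)) \<inter> hbox d (fst (bx d N v)) (snd (bx d N v)) = {})"
proof (induction l)
  case 0
  have "hbox d (\<lambda>_. 0) (\<lambda>_. 1) = unitQ d" by (simp add: hbox_def unitQ_def)
  then show ?case by (simp add: words_0 bx_Nil)
next
  case (Suc l)
  note IH = Suc.IH[OF Nmono[OF Suc.prems]]
  let ?H = "\<lambda>u. hbox d (fst (bx d N u)) (snd (bx d N u))"
  let ?P = "\<lambda>v. pt (qq d N l) (rr d N v) (fst (bx d N v)) (snd (bx d N v))"
  note mc = mem_child[OF d _ Suc.prems]
  have ex: "\<exists>u\<in>words d (Suc l). x \<in> ?H u" if x: "x \<in> unitQ d" for x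
  proof -
    obtain v where v: "v \<in> words d l" "x \<in> ?H v" using IH x by blast
    obtain a where a: "a < 2^d" "\<forall>j\<in>{1..d}. x j < ?P v j (a div 2^j) \<longleftrightarrow> eps j a = 0"
      using child_exists[of d x "?P v"] by blast
    have "x \<in> ?H (v @ [a])" using mc[OF v(1)] v(2) a(2) by blast
    moreover have "v @ [a] \<in> words d (Suc l)" using v(1) a(1) words_snoc by blast
    ultimately show ?thesis by blast
  qed
  have dj: "?H u \<inter> ?H u' = {}" if u: "u \<in> words d (Suc l)" "u' \<in> words d (Suc l)" "u \<noteq> u'" for u u'
  proof -
    obtain v a where v: "u = v @ [a]" "v \<in> words d l" "a < 2^d" using words_Suc[OF u(1)] by blast
    obtain v' a' where v': "u' = v' @ [a']" "v' \<in> words d l" "a' < 2^d" using words_Suc[OF u(2)] by blast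
    show ?thesis
    proof (cases "v = v'")
      case False
      then have "?H v \<inter> ?H v' = {}" using IH v(2) v'(2) by blast
      moreover have "?H u \<subseteq> ?H v" "?H u' \<subseteq> ?H v'" using mc[OF v(2)] mc[OF v'(2)] v(1) v'(1) by blast+
      ultimately show ?thesis by blast
    next
      case True
      then have aa: "a \<noteq> a'" using u(3) v(1) v'(1) by simp
      show ?thesis
      proof (rule ccontr)
        assume "?H u \<inter> ?H u' \<noteq> {}"
        then obtain x where "x \<in> ?H u" "x \<in> ?H u'" by blast
        then have "\<forall>j\<in>{1..d}. x j < ?P v j (a div 2^j) \<longleftrightarrow> eps j a = 0"
            "\<forall>j\<in>{1..d}. x j < ?P v j (a' div 2^j) \<longleftrightarrow> eps j a' = 0"
          using mc[OF v(2)] v(1) v'(1) True by blast+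
        then have "a = a'" by (rule child_unique[OF v(3) v'(3)])
        then show False using aa by simp
      qed
    qed
  qed
  show ?case using ex dj by blast
qed



lemma Lmin_lt: assumes "1 \<le> Lmin d N" shows "((2::nat)^d)^(Lmin d N - 1) < N"
proof -
  have "Lmin d N - 1 < Lmin d N" using assms by simp
  then have "\<not> N \<le> ((2::nat)^d)^(Lmin d N - 1)" unfolding Lmin_def by (rule not_less_Least)
  then show ?thesis by simp
qed

theorem proposition2p9:
  fixes d N :: nat
  assumes "d \<ge> 2" and "Lmin d N \<ge> 3"
  shows "\<forall>l \<le> Lmin d N - 2. \<exists>lo hi :: nat list \<Rightarrow> nat \<Rightarrow> real.
     (\<forall>u \<in> words d l. (\<forall>j \<in> {1..d}. lo u j \<le> hi u j) \<and> hbox d (lo u) (hi u) \<subseteq> unitQ d)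
   \<and> unitQ d - (\<Union>u \<in> words d l. hbox d (lo u) (hi u)) \<in> null_sets (lebd d)
   \<and> (\<forall>u \<in> words d l. \<forall>v \<in> words d l. u \<noteq> v \<longrightarrow>
          hbox d (lo u) (hi u) \<inter> hbox d (lo v) (hi v) \<in> null_sets (lebd d))
   \<and> (\<forall>u \<in> words d l. measure (lebd d) (hbox d (lo u) (hi u)) = real (Mcount d N u) / real N)
   \<and> (\<forall>u \<in> words d l. \<forall>j \<in> {1..d}.
          \<bar>lo u j - corner u j\<bar> \<le> Ssum d N l \<and>
          \<bar>hi u j - (corner u j + 1 / 2 ^ l)\<bar> \<le> Ssum d N l)"
proof (intro allI impI)
  fix l assume l: "l \<le> Lmin d N - 2"
  have d: "2 \<le> d" using assms by simp
  have "((2::nat)^d)^Suc l \<le> ((2::nat)^d)^(Lmin d N - 1)"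
    using l assms(2) by (intro power_increasing) auto
  then have N: "((2::nat)^d)^Suc l \<le> N" using Lmin_lt[of d N] assms(2) by linarith
  define lo where "lo = (\<lambda>u. fst (bx d N u))"
  define hi where "hi = (\<lambda>u. snd (bx d N u))"
  note I = inv[OF d _ N, unfolded lo_def[symmetric] hi_def[symmetric]]
  note P = part[OF d N, unfolded lo_def[symmetric] hi_def[symmetric]]
  have emp: "{} \<in> null_sets (lebd d)" by simp
  show "\<exists>lo hi :: nat list \<Rightarrow> nat \<Rightarrow> real.
     (\<forall>u \<in> words d l. (\<forall>j \<in> {1..d}. lo u j \<le> hi u j) \<and> hbox d (lo u) (hi u) \<subseteq> unitQ d)
   \<and> unitQ d - (\<Union>u \<in> words d l. hbox d (lo u) (hi u)) \<in> null_sets (lebd d)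
   \<and> (\<forall>u \<in> words d l. \<forall>v \<in> words d l. u \<noteq> v \<longrightarrow>
          hbox d (lo u) (hi u) \<inter> hbox d (lo v) (hi v) \<in> null_sets (lebd d))
   \<and> (\<forall>u \<in> words d l. measure (lebd d) (hbox d (lo u) (hi u)) = real (Mcount d N u) / real N)
   \<and> (\<forall>u \<in> words d l. \<forall>j \<in> {1..d}.
          \<bar>lo u j - corner u j\<bar> \<le> Ssum d N l \<and>
          \<bar>hi u j - (corner u j + 1 / 2 ^ l)\<bar> \<le> Ssum d N l)"
  proof (rule exI[of _ lo], rule exI[of _ hi], intro conjI)
    show "\<forall>u \<in> words d l. (\<forall>j \<in> {1..d}. lo u j \<le> hi u j) \<and> hbox d (lo u) (hi u) \<subseteq> unitQ d"
    proof
      fix u assume u: "u \<in> words d l"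
      have A: "\<forall>j\<in>{1..d}. lo u j \<le> hi u j" using I[OF u] by (auto simp: lo_def hi_def)
      have B: "hbox d (lo u) (hi u) \<subseteq> unitQ d" unfolding hbox_def unitQ_def
      proof (rule PiE_mono)
        fix j assume "j \<in> {1..d}"
        then have "0 \<le> lo u j" "hi u j \<le> 1" using I[OF u] by (auto simp: lo_def hi_def)
        then show "{lo u j..<hi u j} \<subseteq> {0..<1}" by auto
      qed
      show "(\<forall>j \<in> {1..d}. lo u j \<le> hi u j) \<and> hbox d (lo u) (hi u) \<subseteq> unitQ d" using A B by blast
    qed
    show "\<forall>u \<in> words d l. measure (lebd d) (hbox d (lo u) (hi u)) = real (Mcount d N u) / real N"
    proof
      fix u assume u: "u \<in> words d l"
      have "measure (lebd d) (hbox d (lo u) (hi u)) = (\<Prod>j\<in>{1..d}. hi u j - lo u j)"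
        by (rule measure_hbox) (use I[OF u] in \<open>auto simp: lo_def hi_def\<close>)
      also have "\<dots> = real (KK d N u) / real N" using I[OF u] by (auto simp: lo_def hi_def)
      also have "KK d N u = Mcount d N u" using Mcount_KK[of d u l N] d u by simp
      finally show "measure (lebd d) (hbox d (lo u) (hi u)) = real (Mcount d N u) / real N" .
    qed
    show "\<forall>u \<in> words d l. \<forall>j \<in> {1..d}.
          \<bar>lo u j - corner u j\<bar> \<le> Ssum d N l \<and>
          \<bar>hi u j - (corner u j + 1 / 2 ^ l)\<bar> \<le> Ssum d N l"
      using I by (auto simp: lo_def hi_def)
    have "unitQ d - (\<Union>u \<in> words d l. hbox d (lo u) (hi u)) = {}" using P by (auto simp: lo_def hi_def)
    then show "unitQ d - (\<Union>u \<in> words d l. hbox d (lo u) (hi u)) \<in> null_sets (lebd d)" using emp by (simp only:)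
    show "\<forall>u \<in> words d l. \<forall>v \<in> words d l. u \<noteq> v \<longrightarrow>
          hbox d (lo u) (hi u) \<inter> hbox d (lo v) (hi v) \<in> null_sets (lebd d)"
    proof (intro ballI impI)
      fix u v assume "u \<in> words d l" "v \<in> words d l" "u \<noteq> v"
      then have "hbox d (lo u) (hi u) \<inter> hbox d (lo v) (hi v) = {}" using P by (auto simp: lo_def hi_def)
      then show "hbox d (lo u) (hi u) \<inter> hbox d (lo v) (hi v) \<in> null_sets (lebd d)" using emp by simp
    qed
  qed
qed


end
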